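(* Let $\alpha\in(0,1]$, $\gamma\in(0,1)$, and let $\delta>1$, $k\ge1$ and $c\ge\frac{4+2\delta}{3(\delta-1)^2}\log\frac{k}{\alpha}$ be constants. If $W\le c\tau$, then Algorithm 1 (with parameters $\gamma,c$ and subroutine $\textsf{ALG}_{\textsf{RoE}}$) satisfies $$\mathbf{E}\left[\frac{a(\boldsymbol{w})}{f(\boldsymbol{w})}\right]\ge\frac{\gamma\log(1/\gamma)}{c+1}.$$
   Context: Setting: $E$ is a finite ground set, $\mathcal{F}\subseteq2^E$ is downward-closed, each $e\in E$ has a nonnegative weight $w_e\sim D_e$ independently, with the $D_e$ having no point masses. Elements arrive online in a fixed order with their weights; an online algorithm decides immediately and irrevocably whether to accept each element, keeping the accepted set in $\mathcal{F}$. $f(\boldsymbol{w})=\max_{S\in\mathcal{F}}\sum_{e\in S}w_e$. Let $\tau$ be such that $\Pr[\max_{e\in E}w_e\le\tau]=\gamma$, let $\mathcal{E}_0$ be the event $\{w_e\le\tau\ \forall e\in E\}$, and $W=\mathbf{E}[f(\boldsymbol{w})\mid\mathcal{E}_0]$. $\textsf{ALG}_{\textsf{RoE}}$ is an online algorithm satisfying $\mathbf{E}[\text{value of }\textsf{ALG}_{\textsf{RoE}}\mid\mathcal{E}_0]\ge\alpha\,\mathbf{E}[f(\boldsymbol{w})\mid\mathcal{E}_0]$. Algorithm 1: if $W\le c\tau$, it accepts only the first arriving element $e^*$ with $w_{e^*}\ge\tau$ (and nothing if none exists); otherwise, it runs $\textsf{ALG}_{\textsf{RoE}}$ as long as all arrived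 weights are at most $\tau$, and as soon as an element with weight exceeding $\tau$ arrives, it rejects it and all remaining elements. $a(\boldsymbol{w})$ is the total weight of the set selected by Algorithm 1; $\log$ is the natural logarithm. *)

theory Defs
  imports "HOL-Probability.Probability"
begin

text \<open>Ground set E = {..<n}; elements arrive in the order 0, 1, ..., n-1.
  A weight vector is a function w :: nat => real (only values on {..<n} matter).\<close>

definition downward_closed :: "nat set set \<Rightarrow> bool" where
  "downward_closed F \<longleftrightarrow> (\<forall>S\<in>F. \<forall>T. T \<subseteq> S \<longrightarrow> T \<in> F)"

definition opt_val :: "nat set set \<Rightarrow> (nat \<Rightarrow> real) \<Rightarrow> real" where
  "opt_val F w = Max ((\<lambda>S. \<Sum>e\<in>S. w e) ` F)"

definition weight_measure :: "nat \<Rightarrow> (nat \<Rightarrow> real measure) \<Rightarrow> (nat \<Rightarrow> real) measure" where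
  "weight_measure n D = PiM {..<n} D"

definition event0 :: "nat \<Rightarrow> (nat \<Rightarrow> real measure) \<Rightarrow> real \<Rightarrow> (nat \<Rightarrow> real) set" where
  "event0 n D \<tau> = {w \<in> space (weight_measure n D). \<forall>e<n. w e \<le> \<tau>}"

definition cond_opt :: "nat \<Rightarrow> nat set set \<Rightarrow> (nat \<Rightarrow> real measure) \<Rightarrow> real \<Rightarrow> real" where
  "cond_opt n F D \<tau> =
     (\<integral>w\<in>event0 n D \<tau>. opt_val F w \<partial>weight_measure n D)
       / measure (weight_measure n D) (event0 n D \<tau>)"

text \<open>Value of Algorithm 1.  The subroutine ALG_RoE is given by its (online) acceptance
  rule roe :: nat => (nat => real) => bool (roe e w: does ALG_RoE accept element e on
  input w).\<close>
definition alg1_value ::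
  "nat \<Rightarrow> real \<Rightarrow> real \<Rightarrow> real \<Rightarrow> (nat \<Rightarrow> (nat \<Rightarrow> real) \<Rightarrow> bool) \<Rightarrow> (nat \<Rightarrow> real) \<Rightarrow> real" where
  "alg1_value n c \<tau> W roe w =
     (if W \<le> c * \<tau> then
        (if \<exists>e<n. w e \<ge> \<tau> then w (LEAST e. e < n \<and> w e \<ge> \<tau>) else 0)
      else
        (\<Sum>e\<in>{e. e < n \<and> roe e w \<and> (\<forall>j\<le>e. w j \<le> \<tau>)}. w e))"

end

theory Submission
  imports Defs
begin


lemma indep:
  fixes M :: "nat \<Rightarrow> real measure" and h :: "(nat \<Rightarrow> real) \<Rightarrow> real"
  assumes Mp: "\<And>i. prob_space (M i)" and B: "\<And>i. sets (M i) = sets borel"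
    and e: "e < n" and S: "S \<in> sets borel"
    and h: "h \<in> borel_measurable (PiM {..<n} M)"
    and hb: "\<And>w. w \<in> space (PiM {..<n} M) \<Longrightarrow> \<bar>h w\<bar> \<le> K"
    and hind: "\<And>w y. h (w(e:=y)) = h (w(e:=0))"
  shows "(\<integral>w. indicator S (w e) * h w \<partial>PiM {..<n} M) = measure (M e) S * (\<integral>w. h w \<partial>PiM {..<n} M)"
proof -
  interpret product_prob_space M UNIV using Mp by (simp add: product_prob_space_def product_prob_space_axioms_def product_sigma_finite_def prob_space_imp_sigma_finite)
  interpret Pn: prob_space "PiM {..<n} M" by (rule prob_space_PiM) (use Mp in auto)
  define I where "I = {..<n} - {e}"
  have IE: "{..<n} = insert e I" "finite I" "e \<notin> I" using e by (auto simp: I_def)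
  have int1: "integrable (PiM {..<n} M) h"
    by (rule Pn.integrable_const_bound[where B=K]) (use hb h in auto)
  have hm2: "(\<lambda>w. indicator S (w e) * h w) \<in> borel_measurable (PiM {..<n} M)"
  proof -
    have ce: "(\<lambda>w. w e) \<in> borel_measurable (PiM {..<n} M)"
      using measurable_component_singleton[of e "{..<n}" M] e B[of e] by (metis measurable_cong_sets lessThan_iff)
    show ?thesis using ce h S by (auto intro!: borel_measurable_times measurable_compose[OF ce borel_measurable_indicator])
  qed
  have int2: "integrable (PiM {..<n} M) (\<lambda>w. indicator S (w e) * h w)"
  proof (rule Pn.integrable_const_bound[where B=K])
    show "AE x in PiM {..<n} M. norm (indicator S (x e) * h x) \<le> K"
    proof (rule AE_I2)
      fix w assume w: "w \<in> space (PiM {..<n} M)"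
      have "\<bar>indicator S (w e) * h w\<bar> \<le> \<bar>h w\<bar>" by (simp add: indicator_def abs_mult)
      also have "\<dots> \<le> K" by (rule hb[OF w])
      finally show "norm (indicator S (w e) * h w) \<le> K" by simp
    qed
  qed (rule hm2)
  have "(\<integral>w. indicator S (w e) * h w \<partial>PiM {..<n} M)
      = (\<integral>x. (\<integral>y. indicator S y * h (x(e:=y)) \<partial>M e) \<partial>PiM I M)"
    using product_integral_insert[OF IE(2,3), of "\<lambda>w. indicator S (w e) * h w"] int2 IE(1) by simp
  also have "\<dots> = (\<integral>x. measure (M e) S * h (x(e:=0)) \<partial>PiM I M)"
  proof (rule Bochner_Integration.integral_cong[OF refl])
    fix x
    interpret Me: prob_space "M e" by (rule Mp)
    have "(\<integral>y. indicator S y * h (x(e:=y)) \<partial>M e) = (\<integral>y. indicator S y * h (x(e:=0)) \<partial>M e)"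
      by (intro Bochner_Integration.integral_cong refl arg_cong2[where f=times] hind)
    also have "\<dots> = measure (M e) S * h (x(e:=0))"
      using S B[of e] by (simp add: sets_eq_imp_space_eq)
    finally show "(\<integral>y. indicator S y * h (x(e:=y)) \<partial>M e) = measure (M e) S * h (x(e:=0))" .
  qed
  also have "\<dots> = measure (M e) S * (\<integral>x. (\<integral>y. h (x(e:=y)) \<partial>M e) \<partial>PiM I M)"
  proof -
    interpret Me: prob_space "M e" by (rule Mp)
    have inner: "(\<integral>y. h (x(e:=y)) \<partial>M e) = h (x(e:=0))" for x
    proof -
      have "(\<integral>y. h (x(e:=y)) \<partial>M e) = (\<integral>y. h (x(e:=0)) \<partial>M e)"
        by (intro Bochner_Integration.integral_cong refl hind)
      then show ?thesis using prob_space.prob_space[OF Mp[of e]] by simp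
    qed
    show ?thesis by (simp add: inner)
  qed
  also have "(\<integral>x. (\<integral>y. h (x(e:=y)) \<partial>M e) \<partial>PiM I M) = (\<integral>w. h w \<partial>PiM {..<n} M)"
    using product_integral_insert[OF IE(2,3), of h] int1 IE(1) by simp
  finally show ?thesis .
qed



lemma opt_ge:
  assumes "finite F" "S \<in> F" shows "(\<Sum>e\<in>S. w e) \<le> opt_val F w"
  unfolding opt_val_def using assms by (intro Max_ge) auto

lemma opt_nonneg:
  assumes "finite F" "{} \<in> F" shows "0 \<le> opt_val F w"
  using opt_ge[OF assms, of w] by simp

lemma opt_le_pos:
  assumes "finite F" "F \<noteq> {}" "F \<subseteq> Pow {..<n}" shows "opt_val F w \<le> (\<Sum>j<n. max (w j) 0)"
  unfolding opt_val_def
proof (subst Max_le_iff)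
  show "\<forall>a\<in>(\<lambda>S. \<Sum>e\<in>S. w e) ` F. a \<le> (\<Sum>j<n. max (w j) 0)"
  proof
    fix a assume "a \<in> (\<lambda>S. \<Sum>e\<in>S. w e) ` F"
    then obtain S where S: "S \<in> F" "a = (\<Sum>e\<in>S. w e)" by auto
    have Ss: "S \<subseteq> {..<n}" using S assms(3) by auto
    have "a \<le> (\<Sum>e\<in>S. max (w e) 0)" using S by (auto intro: sum_mono)
    also have "\<dots> \<le> (\<Sum>j<n. max (w j) 0)" by (rule sum_mono2) (use Ss in auto)
    finally show "a \<le> (\<Sum>j<n. max (w j) 0)" .
  qed
qed (use assms(1,2) in simp_all)

lemma opt_drop:
  assumes "finite F" "F \<noteq> {}" "downward_closed F" shows "opt_val F (w(e:=0)) \<le> opt_val F w"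
  unfolding opt_val_def
proof (subst Max_le_iff)
  show "\<forall>a\<in>(\<lambda>S. \<Sum>x\<in>S. (w(e:=0)) x) ` F. a \<le> Max ((\<lambda>S. \<Sum>e\<in>S. w e) ` F)"
  proof
    fix a assume "a \<in> (\<lambda>S. \<Sum>x\<in>S. (w(e:=0)) x) ` F"
    then obtain S where S: "S \<in> F" "a = (\<Sum>x\<in>S. (w(e:=0)) x)" by auto
    have "a = (\<Sum>x\<in>S-{e}. w x)"
    proof (cases "finite S")
      case True
      have "(\<Sum>x\<in>S. (w(e:=0)) x) = (\<Sum>x\<in>S-{e}. (w(e:=0)) x)"
        using True by (intro sum.mono_neutral_right) auto
      then show ?thesis using S by simp
    qed (use S in simp)
    also have "\<dots> \<le> Max ((\<lambda>S. \<Sum>e\<in>S. w e) ` F)"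
    proof -
      have "S - {e} \<in> F" using assms(3) S(1) unfolding downward_closed_def by (meson Diff_subset)
      then show ?thesis using opt_ge[OF assms(1), of "S-{e}" w] unfolding opt_val_def by simp
    qed
    finally show "a \<le> Max ((\<lambda>S. \<Sum>e\<in>S. w e) ` F)" .
  qed
qed (use assms(1,2) in simp_all)


definition algS :: "nat \<Rightarrow> real \<Rightarrow> (nat \<Rightarrow> real) \<Rightarrow> real" where
  "algS n \<tau> w = (if \<exists>e<n. \<tau> \<le> w e then w (LEAST e. e < n \<and> \<tau> \<le> w e) else 0)"

lemma algS_bounds:
  assumes fin: "finite F" and sing: "\<forall>e<n. {e} \<in> F" and emp: "{} \<in> F" and tau: "0 < \<tau>"
  shows "0 \<le> algS n \<tau> w / opt_val F w" "algS n \<tau> w / opt_val F w \<le> 1"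
proof -
  have "0 \<le> algS n \<tau> w \<and> algS n \<tau> w \<le> opt_val F w"
  proof (cases "\<exists>e<n. \<tau> \<le> w e")
    case True
    define l where "l = (LEAST e. e < n \<and> \<tau> \<le> w e)"
    have l: "l < n \<and> \<tau> \<le> w l" unfolding l_def using True by (metis (mono_tags, lifting) LeastI)
    have "w l \<le> opt_val F w" using opt_ge[OF fin, of "{l}" w] sing l by auto
    then show ?thesis using True l tau unfolding algS_def l_def by auto
  qed (use opt_nonneg[OF fin emp] in \<open>auto simp: algS_def\<close>)
  then show "0 \<le> algS n \<tau> w / opt_val F w" "algS n \<tau> w / opt_val F w \<le> 1"
    by (auto simp: divide_le_eq_1)
qed

lemma pointwise:
  assumes fin: "finite F" and Fs: "F \<subseteq> Pow {..<n}" and dc: "downward_closed F"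
    and sing: "\<forall>e<n. {e} \<in> F" and emp: "{} \<in> F" and tau: "0 < \<tau>"
    and e: "e < n" and we: "\<tau> < w e" and wj: "\<forall>j<n. j \<noteq> e \<longrightarrow> w j < \<tau>"
  shows "\<tau> / (\<tau> + opt_val F (w(e:=0))) \<le> algS n \<tau> w / opt_val F w"
proof -
  have L: "(LEAST e'. e' < n \<and> \<tau> \<le> w e') = e"
  proof (rule Least_equality)
    show "e < n \<and> \<tau> \<le> w e" using e we by simp
  next
    fix y assume y: "y < n \<and> \<tau> \<le> w y"
    show "e \<le> y"
    proof (rule ccontr)
      assume "\<not> e \<le> y"
      then have "y \<noteq> e" by simp
      then have "w y < \<tau>" using wj y by blast
      then show False using y by simp
    qed
  qed
  have a: "algS n \<tau> w = w e" unfolding algS_def L using e we by auto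
  define X where "X = opt_val F (w(e:=0))"
  have X0: "0 \<le> X" unfolding X_def by (rule opt_nonneg[OF fin emp])
  have lo: "w e \<le> opt_val F w" using opt_ge[OF fin, of "{e}" w] sing e by auto
  have up: "opt_val F w \<le> w e + X"
    unfolding opt_val_def
  proof (subst Max_le_iff)
    show "\<forall>a\<in>(\<lambda>S. \<Sum>e\<in>S. w e) ` F. a \<le> w e + X"
    proof
      fix a assume "a \<in> (\<lambda>S. \<Sum>e\<in>S. w e) ` F"
      then obtain S where S: "S \<in> F" "a = (\<Sum>e\<in>S. w e)" by auto
      have fS: "finite S" using S Fs finite_subset by auto
      have "(\<Sum>x\<in>S-{e}. w x) \<le> X"
        using opt_ge[OF fin, of "S-{e}" "w(e:=0)"] dc S unfolding X_def downward_closed_def by auto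
      moreover have "a = (if e \<in> S then w e else 0) + (\<Sum>x\<in>S-{e}. w x)"
        using S fS by (simp add: sum.remove)
      ultimately show "a \<le> w e + X" using we tau by auto
    qed
  qed (use fin emp in auto)
  have "\<tau> / (\<tau> + X) \<le> w e / (w e + X)"
    using tau we X0 by (simp add: divide_simps) (simp add: algebra_simps mult_left_mono)
  also have "\<dots> \<le> w e / opt_val F w"
    using tau we lo up by (intro divide_left_mono) auto
  finally show ?thesis unfolding a X_def .
qed

definition Hf :: "nat set set \<Rightarrow> nat \<Rightarrow> real \<Rightarrow> nat \<Rightarrow> (nat \<Rightarrow> real) \<Rightarrow> real" where
  "Hf F n \<tau> e w = (if \<forall>j<n. j \<noteq> e \<longrightarrow> w j < \<tau> then \<tau> / (\<tau> + opt_val F (w(e:=0))) else 0)"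

lemma sum_le:
  assumes fin: "finite F" and Fs: "F \<subseteq> Pow {..<n}" and dc: "downward_closed F"
    and sing: "\<forall>e<n. {e} \<in> F" and emp: "{} \<in> F" and tau: "0 < \<tau>"
  shows "(\<Sum>e<n. indicator {\<tau><..} (w e) * Hf F n \<tau> e w) \<le> algS n \<tau> w / opt_val F w"
proof (cases "\<exists>e0<n. \<tau> < w e0 \<and> (\<forall>j<n. j \<noteq> e0 \<longrightarrow> w j < \<tau>)")
  case True
  then obtain e0 where e0: "e0 < n" "\<tau> < w e0" "\<forall>j<n. j \<noteq> e0 \<longrightarrow> w j < \<tau>" by auto
  have "(\<Sum>e<n. indicator {\<tau><..} (w e) * Hf F n \<tau> e w) = (\<Sum>e\<in>{e0}. indicator {\<tau><..} (w e) * Hf F n \<tau> e w)"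
  proof (rule sum.mono_neutral_right)
    show "\<forall>i\<in>{..<n} - {e0}. indicator {\<tau><..} (w i) * Hf F n \<tau> i w = 0"
    proof
      fix i assume i: "i \<in> {..<n} - {e0}"
      show "indicator {\<tau><..} (w i) * Hf F n \<tau> i w = 0"
      proof (cases "\<tau> < w i")
        case True
        have ne: "e0 \<noteq> i" using i by auto
        have "\<not> (\<forall>j<n. j \<noteq> i \<longrightarrow> w j < \<tau>)"
        proof
          assume "\<forall>j<n. j \<noteq> i \<longrightarrow> w j < \<tau>"
          then have "w e0 < \<tau>" using e0(1) ne by blast
          then show False using e0(2) by simp
        qed
        then have "Hf F n \<tau> i w = 0" unfolding Hf_def by (rule if_not_P)
        then show ?thesis by simp
      qed (simp add: indicator_def)
    qed
  qed (use e0 in simp_all)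
  also have "\<dots> = \<tau> / (\<tau> + opt_val F (w(e0:=0)))" using e0 by (simp add: Hf_def indicator_def)
  also have "\<dots> \<le> algS n \<tau> w / opt_val F w" by (rule pointwise[OF fin Fs dc sing emp tau e0])
  finally show ?thesis .
next
  case False
  have "(\<Sum>e<n. indicator {\<tau><..} (w e) * Hf F n \<tau> e w) = 0"
  proof (rule sum.neutral, rule ballI)
    fix e assume ee: "e \<in> {..<n}"
    show "indicator {\<tau><..} (w e) * Hf F n \<tau> e w = 0"
    proof (cases "\<tau> < w e")
      case True
      then have "\<not> (\<forall>j<n. j \<noteq> e \<longrightarrow> w j < \<tau>)" using False ee by blast
      then have "Hf F n \<tau> e w = 0" unfolding Hf_def by (rule if_not_P)
      then show ?thesis by simp
    qed (simp add: indicator_def)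
  qed
  then show ?thesis using algS_bounds[OF fin sing emp tau, of w] by simp
qed

lemma tangent:
  fixes \<tau> x m :: real
  assumes "0 < \<tau>" "0 \<le> x" "0 \<le> m"
  shows "\<tau> / (\<tau> + m) - \<tau> / (\<tau> + m)^2 * (x - m) \<le> \<tau> / (\<tau> + x)"
proof -
  have p: "0 < \<tau> + m" "0 < \<tau> + x" using assms by auto
  have "\<tau> / (\<tau> + m) - \<tau> / (\<tau> + m)^2 * (x - m) = \<tau> * (\<tau> + 2*m - x) / (\<tau> + m)^2"
  proof -
    have "\<tau> / (\<tau> + m) = \<tau> * (\<tau> + m) / (\<tau> + m)^2" using p by (simp add: power2_eq_square)
    then have "\<tau> / (\<tau> + m) - \<tau> / (\<tau> + m)^2 * (x - m) = (\<tau> * (\<tau> + m) - \<tau> * (x - m)) / (\<tau> + m)^2"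
      by (simp add: diff_divide_distrib)
    also have "\<tau> * (\<tau> + m) - \<tau> * (x - m) = \<tau> * (\<tau> + 2*m - x)" by (simp add: algebra_simps)
    finally show ?thesis .
  qed
  also have "\<dots> \<le> \<tau> / (\<tau> + x)"
  proof -
    have "(\<tau> + 2*m - x) * (\<tau> + x) \<le> (\<tau> + m)^2"
      using sum_squares_ge_zero[of 0 "x - m"] by (simp add: power2_eq_square algebra_simps)
    then have "\<tau> * ((\<tau> + 2*m - x) * (\<tau> + x)) \<le> \<tau> * (\<tau> + m)^2" using assms by (intro mult_left_mono) auto
    then show ?thesis using p by (simp add: divide_simps)
  qed
  finally show ?thesis .
qed



lemma comp_meas:
  fixes M :: "nat \<Rightarrow> real measure"
  assumes B: "\<And>i. sets (M i) = sets borel" and e: "e < n"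
  shows "(\<lambda>w. w e) \<in> borel_measurable (PiM {..<n} M)"
  using measurable_component_singleton[of e "{..<n}" M] e B[of e] by (metis measurable_cong_sets lessThan_iff)

lemma opt_meas:
  assumes v: "\<And>j. j < n \<Longrightarrow> (\<lambda>w. v w j) \<in> borel_measurable N"
    and fin: "finite F" and Fs: "F \<subseteq> Pow {..<n}"
  shows "(\<lambda>w. opt_val F (v w)) \<in> borel_measurable N"
  unfolding opt_val_def
proof (rule borel_measurable_Max[OF fin])
  fix S assume "S \<in> F"
  then have "S \<subseteq> {..<n}" using Fs by auto
  then show "(\<lambda>w. \<Sum>e\<in>S. v w e) \<in> borel_measurable N"
    by (intro borel_measurable_sum) (use v in auto)
qed

lemma algS_meas:
  fixes M :: "nat \<Rightarrow> real measure"
  assumes B: "\<And>i. sets (M i) = sets borel"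
  shows "(\<lambda>w. algS n \<tau> w) \<in> borel_measurable (PiM {..<n} M)"
proof -
  define f where "f i w = (if i < n then w i else (0::real))" for i w
  have fm: "(\<lambda>w. f i w) \<in> borel_measurable (PiM {..<n} M)" for i
    by (cases "i < n") (auto simp: f_def comp_meas[OF B])
  have pi: "(\<lambda>w. i < n \<and> \<tau> \<le> w i) \<in> measurable (PiM {..<n} M) (count_space UNIV)" for i
  proof (cases "i < n")
    case True
    have "(\<lambda>w. w i) \<in> borel_measurable (PiM {..<n} M)" by (rule comp_meas[OF B True])
    then show ?thesis using True by measurable
  qed simp
  have L: "(\<lambda>w. LEAST i. i < n \<and> \<tau> \<le> w i) \<in> measurable (PiM {..<n} M) (count_space UNIV)"
    by (rule measurable_Least) (rule pi)
  have fL: "(\<lambda>w. f (LEAST i. i < n \<and> \<tau> \<le> w i) w) \<in> borel_measurable (PiM {..<n} M)"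
    by (rule measurable_compose_countable'[OF _ L]) (auto intro: fm)
  have ex: "(\<lambda>w. \<exists>i\<in>{..<n}. \<tau> \<le> w i) \<in> measurable (PiM {..<n} M) (count_space UNIV)"
  proof (rule pred_intros_finite)
    fix i assume "i \<in> {..<n}"
    then have "(\<lambda>w. w i) \<in> borel_measurable (PiM {..<n} M)" by (intro comp_meas[OF B]) auto
    then show "(\<lambda>w. \<tau> \<le> w i) \<in> measurable (PiM {..<n} M) (count_space UNIV)" by measurable
  qed simp
  have eq: "algS n \<tau> w = (if \<exists>i\<in>{..<n}. \<tau> \<le> w i then f (LEAST i. i < n \<and> \<tau> \<le> w i) w else 0)" for w
  proof (cases "\<exists>i<n. \<tau> \<le> w i")
    case True
    then have "(LEAST i. i < n \<and> \<tau> \<le> w i) < n" by (metis (mono_tags, lifting) LeastI)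
    then show ?thesis using True by (auto simp: algS_def f_def)
  qed (auto simp: algS_def)
  show ?thesis unfolding eq by (rule measurable_If[OF fL borel_measurable_const ex[unfolded pred_def]])
qed

lemma Bset_gen:
  fixes n e :: nat
  shows
  "{w \<in> PiE {..<n} (\<lambda>_. UNIV). \<forall>j<n. j \<noteq> e \<longrightarrow> w j < (\<tau>::real)} = PiE {..<n} (\<lambda>j. if j = e then UNIV else {..<\<tau>})"
proof (rule set_eqI)
  fix w :: "nat \<Rightarrow> real"
  show "w \<in> {w \<in> PiE {..<n} (\<lambda>_. UNIV). \<forall>j<n. j \<noteq> e \<longrightarrow> w j < \<tau>} \<longleftrightarrow> w \<in> PiE {..<n} (\<lambda>j. if j = e then UNIV else {..<\<tau>})"
    unfolding PiE_iff mem_Collect_eq by auto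
qed
lemma Blset_gen:
  fixes n e :: nat
  shows
  "{w \<in> PiE {..<n} (\<lambda>_. UNIV). \<forall>j<n. j \<noteq> e \<longrightarrow> w j \<le> (\<tau>::real)} = PiE {..<n} (\<lambda>j. if j = e then UNIV else {..\<tau>})"
proof (rule set_eqI)
  fix w :: "nat \<Rightarrow> real"
  show "w \<in> {w \<in> PiE {..<n} (\<lambda>_. UNIV). \<forall>j<n. j \<noteq> e \<longrightarrow> w j \<le> \<tau>} \<longleftrightarrow> w \<in> PiE {..<n} (\<lambda>j. if j = e then UNIV else {..\<tau>})"
    unfolding PiE_iff mem_Collect_eq by auto
qed

lemma PiE_if_sets:
  fixes M :: "nat \<Rightarrow> real measure"
  assumes B: "\<And>i. sets (M i) = sets borel" and A: "A \<in> sets borel"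
  shows "PiE {..<n} (\<lambda>j. if j = e then UNIV else A) \<in> sets (PiM {..<n} M)"
proof (rule sets_PiM_I_finite)
  fix j assume "j \<in> {..<n}"
  show "(if j = e then UNIV else A) \<in> sets (M j)"
  proof (cases "j = e")
    case True
    have "UNIV \<in> sets (borel :: real measure)" by (metis sets.top space_borel)
    then show ?thesis using True by (simp add: B)
  next
    case False
    then show ?thesis using A by (simp add: B)
  qed
qed simp

lemma lt_borel: "{..<(t::real)} \<in> sets borel" by simp
lemma le_borel: "{..(t::real)} \<in> sets borel" by simp
lemma gt_borel: "{(t::real)<..} \<in> sets borel" by simp

lemma if_lt_borel: "(if P then UNIV else {..<(t::real)}) \<in> sets borel" by (cases P) simp_all



lemma measure_PiE:
  fixes M :: "nat \<Rightarrow> real measure"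
  assumes Mp: "\<And>i. prob_space (M i)" and B: "\<And>i. sets (M i) = sets borel"
    and A: "\<And>i. i < n \<Longrightarrow> A i \<in> sets borel"
  shows "measure (PiM {..<n} M) (PiE {..<n} A) = (\<Prod>i<n. measure (M i) (A i))"
proof -
  interpret product_prob_space M UNIV using Mp by (simp add: product_prob_space_def product_prob_space_axioms_def product_sigma_finite_def prob_space_imp_sigma_finite)
  have "emeasure (PiM {..<n} M) (PiE {..<n} A) = (\<Prod>i<n. emeasure (M i) (A i))"
    by (rule emeasure_PiM) (use A B in auto)
  also have "\<dots> = (\<Prod>i<n. ennreal (measure (M i) (A i)))"
    by (intro prod.cong refl) (simp add: M.emeasure_eq_measure)
  also have "\<dots> = ennreal (\<Prod>i<n. measure (M i) (A i))"
    by (rule prod_ennreal) simp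
  finally show ?thesis by (intro measure_eq_emeasure_eq_ennreal) (auto intro: prod_nonneg)
qed

lemma opt_le_ntau:
  assumes "finite F" "F \<noteq> {}" "F \<subseteq> Pow {..<n}" "\<forall>j<n. v j \<le> \<tau>" "0 \<le> \<tau>"
  shows "opt_val F v \<le> real n * \<tau>"
proof -
  have "opt_val F v \<le> (\<Sum>j<n. max (v j) 0)" by (rule opt_le_pos) (use assms in auto)
  also have "\<dots> \<le> (\<Sum>j<n. \<tau>)" by (intro sum_mono) (use assms in auto)
  finally show ?thesis by simp
qed


theorem lemma1:
  fixes n :: nat and F :: "nat set set" and D :: "nat \<Rightarrow> real measure"
    and \<alpha> \<gamma> \<delta> k c \<tau> :: real
    and roe :: "nat \<Rightarrow> (nat \<Rightarrow> real) \<Rightarrow> bool"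
  assumes F_sub: "F \<subseteq> Pow {..<n}"
    and F_down: "downward_closed F"
    and F_single: "\<forall>e<n. {e} \<in> F"
    and D_prob: "\<forall>e<n. prob_space (D e)"
    and D_borel: "\<forall>e<n. sets (D e) = sets borel"
    and D_nonneg: "\<forall>e<n. AE x in D e. 0 \<le> x"
    and D_noatom: "\<forall>e<n. \<forall>x. emeasure (D e) {x} = 0"
    and alpha: "0 < \<alpha>" "\<alpha> \<le> 1"
    and gamma: "0 < \<gamma>" "\<gamma> < 1"
    and delta: "\<delta> > 1"
    and k: "k \<ge> 1"
    and c: "c \<ge> (4 + 2 * \<delta>) / (3 * (\<delta> - 1)^2) * ln (k / \<alpha>)"
    and tau: "measure (weight_measure n D) (event0 n D \<tau>) = \<gamma>"
    and W_small: "cond_opt n F D \<tau> \<le> c * \<tau>"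
  shows "(\<integral>w. alg1_value n c \<tau> (cond_opt n F D \<tau>) roe w / opt_val F w \<partial>weight_measure n D)
           \<ge> \<gamma> * ln (1 / \<gamma>) / (c + 1)"
proof -
  define D' where "D' i = (if i < n then D i else return borel (0::real))" for i
  have Mp: "\<And>i. prob_space (D' i)" using D_prob by (auto simp: D'_def intro: prob_space_return)
  have Bo: "\<And>i. sets (D' i) = sets borel" using D_borel by (auto simp: D'_def)
  have spD: "\<And>i. space (D' i) = UNIV" using Bo by (metis sets_eq_imp_space_eq space_borel)
  define Mm where "Mm = PiM {..<n} D'"
  have WM: "weight_measure n D = Mm" unfolding weight_measure_def Mm_def
    by (intro PiM_cong) (auto simp: D'_def)
  interpret Pn: prob_space Mm unfolding Mm_def by (rule prob_space_PiM) (use Mp in auto)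
  have spM: "space Mm = PiE {..<n} (\<lambda>_. UNIV)" unfolding Mm_def by (simp add: space_PiM spD)
  define q where "q j = measure (D' j) {..\<tau>}" for j
  have q01: "0 \<le> q j" "q j \<le> 1" for j unfolding q_def using prob_space.prob_le_1[OF Mp] by auto
  have E0: "event0 n D \<tau> = PiE {..<n} (\<lambda>_. {..\<tau>})"
    unfolding event0_def WM spM by auto
  have gq: "\<gamma> = (\<Prod>j<n. q j)"
    using tau unfolding WM E0 Mm_def q_def by (subst (asm) measure_PiE[OF Mp Bo]) auto
  have n0: "n > 0"
  proof (rule ccontr)
    assume "\<not> n > 0" then have "\<gamma> = 1" using gq by simp
    then show False using gamma by simp
  qed
  have qpos: "q j > 0" if "j < n" for j
  proof (rule ccontr)
    assume "\<not> q j > 0" then have "q j = 0" using q01[of j] by simp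
    then have "(\<Prod>j<n. q j) = 0" using that by (intro prod_zero) auto
    then show False using gq gamma by linarith
  qed
  have tpos: "\<tau> > 0"
  proof (rule ccontr)
    assume nt: "\<not> \<tau> > 0"
    interpret D0: prob_space "D' 0" by (rule Mp)
    have D0e: "D' 0 = D 0" using n0 by (simp add: D'_def)
    have ae: "AE x in D' 0. 0 \<le> x" unfolding D0e using D_nonneg n0 by blast
    have "emeasure (D' 0) {x. \<not> 0 \<le> x} = 0"
      using ae by (subst (asm) AE_iff_measurable[of "{x. \<not> 0 \<le> x}"]) (auto simp: spD Bo)
    then have m1: "measure (D' 0) {..<0} = 0" by (simp add: measure_def not_le lessThan_def)
    have m2: "measure (D' 0) {0} = 0" using D_noatom n0 by (simp add: measure_def D'_def)
    have "q 0 \<le> measure (D' 0) ({..<0} \<union> {0})"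
      unfolding q_def using nt by (intro D0.finite_measure_mono) (auto simp: Bo)
    also have "\<dots> \<le> measure (D' 0) {..<0} + measure (D' 0) {0}"
      using D0.finite_measure_Union[of "{..<0}" "{0}"] by (simp add: Bo)
    finally show False using m1 m2 qpos[OF n0] by simp
  qed
  have finF: "finite F" using F_sub by (rule finite_subset) simp
  have empF: "{} \<in> F" using F_down F_single n0 unfolding downward_closed_def by blast
  have Fne: "F \<noteq> {}" using empF by auto
  have c0: "c \<ge> 0"
  proof -
    have "k / \<alpha> \<ge> 1" using alpha k by (simp add: le_divide_eq)
    then have "ln (k / \<alpha>) \<ge> 0" by simp
    moreover have "(4 + 2 * \<delta>) / (3 * (\<delta> - 1)^2) \<ge> 0" using delta by simp
    ultimately show ?thesis using c by (meson mult_nonneg_nonneg order_trans)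
  qed

  have gEq: "(\<integral>w. alg1_value n c \<tau> (cond_opt n F D \<tau>) roe w / opt_val F w \<partial>weight_measure n D)
      = (\<integral>w. algS n \<tau> w / opt_val F w \<partial>Mm)"
    unfolding WM alg1_value_def algS_def using W_small by simp
  have SI: "(\<integral>w. indicator (event0 n D \<tau>) w * opt_val F w \<partial>Mm) \<le> c * \<tau> * \<gamma>"
  proof -
    have ceq: "cond_opt n F D \<tau> = (\<integral>w. indicator (event0 n D \<tau>) w * opt_val F w \<partial>Mm) / \<gamma>"
      using tau unfolding cond_opt_def set_lebesgue_integral_def real_scaleR_def WM by (simp only:)
    have "(\<integral>w. indicator (event0 n D \<tau>) w * opt_val F w \<partial>Mm) / \<gamma> \<le> c * \<tau>"
      using W_small unfolding ceq .
    then show ?thesis by (subst (asm) pos_divide_le_eq[OF gamma(1)]) assumption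
  qed
  have cm: "(\<lambda>w. w j) \<in> borel_measurable Mm" if "j < n" for j
    unfolding Mm_def by (rule comp_meas[OF Bo that])
  have Xm: "(\<lambda>w. opt_val F (w(e:=0))) \<in> borel_measurable Mm" for e
  proof (rule opt_meas[OF _ finF F_sub])
    fix j assume j: "j < n"
    show "(\<lambda>w. (w(e:=0)) j) \<in> borel_measurable Mm"
    proof (cases "j = e")
      case True
      then have eq: "(\<lambda>w. (w(e:=0)) j) = (\<lambda>w. 0)" by (simp add: fun_eq_iff)
      show ?thesis unfolding eq by (rule borel_measurable_const)
    next
      case False
      then have eq: "(\<lambda>w. (w(e:=0)) j) = (\<lambda>w. w j)" by (simp add: fun_eq_iff)
      show ?thesis unfolding eq by (rule cm[OF j])
    qed
  qed
  have optm: "(\<lambda>w. opt_val F w) \<in> borel_measurable Mm"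
    by (rule opt_meas[of n "\<lambda>w. w" Mm F, OF cm finF F_sub])
  define Be where "Be e = PiE {..<n} (\<lambda>j. if j = e then UNIV else {..<\<tau>})" for e
  define Ble where "Ble e = PiE {..<n} (\<lambda>j. if j = e then UNIV else {..\<tau>})" for e
  have Bset: "{w\<in>space Mm. \<forall>j<n. j \<noteq> e \<longrightarrow> w j < \<tau>} = Be e" for e
    unfolding spM Be_def by (rule Bset_gen)
  have Blset: "{w\<in>space Mm. \<forall>j<n. j \<noteq> e \<longrightarrow> w j \<le> \<tau>} = Ble e" for e
    unfolding spM Ble_def by (rule Blset_gen)
  have Bsets: "Be e \<in> sets Mm" "Ble e \<in> sets Mm" for e
    unfolding Mm_def Be_def Ble_def by (rule PiE_if_sets[OF Bo lt_borel], rule PiE_if_sets[OF Bo le_borel])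
  have BsetS: "{w\<in>space Mm. \<forall>j<n. j \<noteq> e \<longrightarrow> w j < \<tau>} \<in> sets Mm" for e
    unfolding Bset by (rule Bsets)
  have BlsetS: "{w\<in>space Mm. \<forall>j<n. j \<noteq> e \<longrightarrow> w j \<le> \<tau>} \<in> sets Mm" for e
    unfolding Blset by (rule Bsets)
  define Ind where "Ind e w = (if \<forall>j<n. j \<noteq> e \<longrightarrow> w j < \<tau> then 1 else (0::real))" for e w
  define Ke where "Ke e w = (if \<forall>j<n. j \<noteq> e \<longrightarrow> w j < \<tau> then opt_val F (w(e:=0)) else 0)" for e w
  define Le where "Le e w = (if \<forall>j<n. j \<noteq> e \<longrightarrow> w j \<le> \<tau> then opt_val F (w(e:=0)) else 0)" for e w
  have Hm: "Hf F n \<tau> e \<in> borel_measurable Mm" for e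
    unfolding Hf_def
    by (rule measurable_If[OF _ borel_measurable_const BsetS])
      (intro borel_measurable_divide borel_measurable_add borel_measurable_const Xm)
  have Indm: "Ind e \<in> borel_measurable Mm" for e
    unfolding Ind_def
    by (rule measurable_If[OF borel_measurable_const borel_measurable_const BsetS])
  have Kem: "Ke e \<in> borel_measurable Mm" for e
    unfolding Ke_def
    by (rule measurable_If[OF Xm borel_measurable_const BsetS])
  have Lem: "Le e \<in> borel_measurable Mm" for e
    unfolding Le_def
    by (rule measurable_If[OF Xm borel_measurable_const BlsetS])
  have Xnn: "0 \<le> opt_val F v" for v by (rule opt_nonneg[OF finF empF])
  have HfT: "Hf F n \<tau> e w = \<tau> / (\<tau> + opt_val F (w(e:=0)))" if "\<forall>j<n. j \<noteq> e \<longrightarrow> w j < \<tau>" for e w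
    unfolding Hf_def using that by (rule if_P)
  have HfF: "Hf F n \<tau> e w = 0" if "\<not> (\<forall>j<n. j \<noteq> e \<longrightarrow> w j < \<tau>)" for e w
    unfolding Hf_def using that by (rule if_not_P)
  have IndT: "Ind e w = 1" if "\<forall>j<n. j \<noteq> e \<longrightarrow> w j < \<tau>" for e w
    unfolding Ind_def using that by (rule if_P)
  have IndF: "Ind e w = 0" if "\<not> (\<forall>j<n. j \<noteq> e \<longrightarrow> w j < \<tau>)" for e w
    unfolding Ind_def using that by (rule if_not_P)
  have KeT: "Ke e w = opt_val F (w(e:=0))" if "\<forall>j<n. j \<noteq> e \<longrightarrow> w j < \<tau>" for e w
    unfolding Ke_def using that by (rule if_P)
  have KeF: "Ke e w = 0" if "\<not> (\<forall>j<n. j \<noteq> e \<longrightarrow> w j < \<tau>)" for e w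
    unfolding Ke_def using that by (rule if_not_P)
  have LeT: "Le e w = opt_val F (w(e:=0))" if "\<forall>j<n. j \<noteq> e \<longrightarrow> w j \<le> \<tau>" for e w
    unfolding Le_def using that by (rule if_P)
  have LeF: "Le e w = 0" if "\<not> (\<forall>j<n. j \<noteq> e \<longrightarrow> w j \<le> \<tau>)" for e w
    unfolding Le_def using that by (rule if_not_P)
  have Hb: "0 \<le> Hf F n \<tau> e w \<and> Hf F n \<tau> e w \<le> 1" for e w
  proof (cases "\<forall>j<n. j \<noteq> e \<longrightarrow> w j < \<tau>")
    case True
    show ?thesis unfolding HfT[OF True] using Xnn[of "w(e:=0)"] tpos by simp
  next
    case False
    show ?thesis unfolding HfF[OF False] by simp
  qed
  have Xb: "opt_val F (w(e:=0)) \<le> real n * \<tau>" if "\<forall>j<n. j \<noteq> e \<longrightarrow> w j \<le> \<tau>" for e w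
    by (rule opt_le_ntau[OF finF Fne F_sub]) (use that tpos in auto)
  have Keb: "0 \<le> Ke e w \<and> Ke e w \<le> real n * \<tau>" for e w
  proof (cases "\<forall>j<n. j \<noteq> e \<longrightarrow> w j < \<tau>")
    case True
    then have "\<forall>j<n. j \<noteq> e \<longrightarrow> w j \<le> \<tau>" by (meson less_imp_le)
    show ?thesis unfolding KeT[OF True] using Xnn[of "w(e:=0)"] Xb[of e w] \<open>\<forall>j<n. j \<noteq> e \<longrightarrow> w j \<le> \<tau>\<close> by simp
  next
    case False
    show ?thesis unfolding KeF[OF False] using tpos by simp
  qed
  have Leb: "0 \<le> Le e w \<and> Le e w \<le> real n * \<tau>" for e w
  proof (cases "\<forall>j<n. j \<noteq> e \<longrightarrow> w j \<le> \<tau>")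
    case True
    show ?thesis unfolding LeT[OF True] using Xnn[of "w(e:=0)"] Xb[OF True] by simp
  next
    case False
    show ?thesis unfolding LeF[OF False] using tpos by simp
  qed
  have intb: "integrable Mm f" if fm: "f \<in> borel_measurable Mm" and fb: "\<And>w. \<bar>f w\<bar> \<le> K" for f :: "(nat \<Rightarrow> real) \<Rightarrow> real" and K :: real
  proof (rule Pn.integrable_const_bound[where B=K, OF _ fm])
    show "AE x in Mm. norm (f x) \<le> K" by (rule AE_I2) (simp only: real_norm_def fb)
  qed
  have Hint: "integrable Mm (Hf F n \<tau> e)" for e
    by (rule intb[of "Hf F n \<tau> e" 1, OF Hm]) (use Hb in auto)
  have Indint: "integrable Mm (Ind e)" for e
  proof (rule intb[of "Ind e" 1, OF Indm])
    fix w show "\<bar>Ind e w\<bar> \<le> 1"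
    proof (cases "\<forall>j<n. j \<noteq> e \<longrightarrow> w j < \<tau>")
      case True
      show ?thesis unfolding IndT[OF True] by simp
    next
      case False
      show ?thesis unfolding IndF[OF False] by simp
    qed
  qed
  have Keint: "integrable Mm (Ke e)" for e
    by (rule intb[of "Ke e" "real n * \<tau>", OF Kem]) (use Keb in \<open>auto simp: abs_le_iff\<close>)
  have Leint: "integrable Mm (Le e)" for e
    by (rule intb[of "Le e" "real n * \<tau>", OF Lem]) (use Leb in \<open>auto simp: abs_le_iff\<close>)
  have gm: "(\<lambda>w. algS n \<tau> w / opt_val F w) \<in> borel_measurable Mm"
    by (rule borel_measurable_divide[OF algS_meas[where M=D' and n=n and \<tau>=\<tau>, OF Bo, folded Mm_def] optm])
  have gint: "integrable Mm (\<lambda>w. algS n \<tau> w / opt_val F w)"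
  proof (rule intb[of "\<lambda>w. algS n \<tau> w / opt_val F w" 1, OF gm])
    fix w
    have b: "0 \<le> algS n \<tau> w / opt_val F w" "algS n \<tau> w / opt_val F w \<le> 1"
      by (rule algS_bounds[OF finF F_single empF tpos])+
    have "\<bar>algS n \<tau> w / opt_val F w\<bar> = algS n \<tau> w / opt_val F w" by (rule abs_of_nonneg[OF b(1)])
    then show "\<bar>algS n \<tau> w / opt_val F w\<bar> \<le> 1" using b(2) by (simp only:)
  qed
  define r where "r e = (\<Prod>j\<in>{..<n}-{e}. q j)" for e
  have qlt: "measure (D' j) {..<\<tau>} = q j" for j
  proof -
    interpret Dj: prob_space "D' j" by (rule Mp)
    have "measure (D' j) {..\<tau>} = measure (D' j) ({..<\<tau>} \<union> {\<tau>})" by (intro arg_cong[where f="measure (D' j)"]) auto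
    also have "\<dots> = measure (D' j) {..<\<tau>} + measure (D' j) {\<tau>}"
      by (rule Dj.finite_measure_Union) (auto simp: Bo)
    also have "measure (D' j) {\<tau>} = 0"
      using D_noatom tpos by (cases "j < n") (auto simp: measure_def D'_def indicator_def)
    finally show ?thesis unfolding q_def by simp
  qed
  have m1: "measure (D' j) UNIV = 1" for j
    using prob_space.prob_space[OF Mp[of j]] spD[of j] by simp
  have pe: "measure (D' e) {\<tau><..} = 1 - q e" for e
  proof -
    interpret De: prob_space "D' e" by (rule Mp)
    have "measure (D' e) (space (D' e) - {..\<tau>}) = 1 - q e"
      unfolding q_def by (rule De.prob_compl) (simp add: Bo)
    moreover have "space (D' e) - {..\<tau>} = {\<tau><..}" by (auto simp: spD)
    ultimately show ?thesis by simp
  qed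
  have PrB: "(\<integral>w. Ind e w \<partial>Mm) = r e" if e: "e < n" for e
  proof -
    have "(\<integral>w. Ind e w \<partial>Mm) = (\<integral>w. indicator (Be e) w \<partial>Mm)"
    proof (rule Bochner_Integration.integral_cong[OF refl])
      fix w assume w: "w \<in> space Mm"
      show "Ind e w = indicator (Be e) w"
      proof (cases "\<forall>j<n. j \<noteq> e \<longrightarrow> w j < \<tau>")
        case True
        then have "w \<in> Be e" using w Bset[of e] by blast
        then show ?thesis unfolding IndT[OF True] by simp
      next
        case False
        then have "w \<notin> Be e" using w Bset[of e] by blast
        then show ?thesis unfolding IndF[OF False] by simp
      qed
    qed
    also have "\<dots> = measure Mm (Be e)"
      using sets.sets_into_space[OF Bsets(1)[of e]] by (simp add: Int_absorb2)
    also have "\<dots> = (\<Prod>j<n. measure (D' j) (if j = e then UNIV else {..<\<tau>}))"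
      unfolding Mm_def Be_def by (rule measure_PiE[OF Mp Bo if_lt_borel])
    also have "\<dots> = (\<Prod>j<n. if j = e then 1 else q j)"
      by (intro prod.cong refl) (auto simp: qlt m1)
    also have "\<dots> = (if e = e then 1 else q e) * (\<Prod>j\<in>{..<n}-{e}. if j = e then 1 else q j)"
      using e by (intro prod.remove) auto
    also have "(\<Prod>j\<in>{..<n}-{e}. if j = e then 1 else q j) = r e"
      unfolding r_def by (intro prod.cong) auto
    finally show ?thesis by simp
  qed
  have gqr: "\<gamma> = q e * r e" if "e < n" for e
    unfolding gq r_def using that by (simp add: prod.remove[of "{..<n}" e])
  have Kle: "(\<integral>w. Ke e w \<partial>Mm) \<le> c * \<tau> * r e" if e: "e < n" for e
  proof -
    have "q e * (\<integral>w. Ke e w \<partial>Mm) \<le> q e * (\<integral>w. Le e w \<partial>Mm)"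
    proof (intro mult_left_mono integral_mono Keint Leint)
      show "0 \<le> q e" by (rule q01)
      fix w
      show "Ke e w \<le> Le e w"
      proof (cases "\<forall>j<n. j \<noteq> e \<longrightarrow> w j < \<tau>")
        case True
        then have T2: "\<forall>j<n. j \<noteq> e \<longrightarrow> w j \<le> \<tau>" by (meson less_imp_le)
        show ?thesis unfolding KeT[OF True] LeT[OF T2] by simp
      next
        case False
        show ?thesis unfolding KeF[OF False] using Leb[of e w] by simp
      qed
    qed
    also have "q e * (\<integral>w. Le e w \<partial>Mm) = (\<integral>w. indicator {..\<tau>} (w e) * Le e w \<partial>Mm)"
      unfolding q_def Mm_def
    proof (rule indep[where M=D' and n=n and e=e and S="{..\<tau>}" and h="Le e" and K="real n * \<tau>", OF Mp Bo e, symmetric])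
      show "Le e \<in> borel_measurable (PiM {..<n} D')" using Lem unfolding Mm_def .
      show "{..\<tau>} \<in> sets borel" by simp
      fix w show "\<bar>Le e w\<bar> \<le> real n * \<tau>" using Leb[of e w] by (auto simp: abs_le_iff)
    next
      fix w y
      have cond: "(\<forall>j<n. j \<noteq> e \<longrightarrow> (w(e:=y)) j \<le> \<tau>) = (\<forall>j<n. j \<noteq> e \<longrightarrow> (w(e:=0)) j \<le> \<tau>)" by simp
      have up: "(w(e:=y))(e:=0) = (w(e:=0))(e:=0)" by simp
      show "Le e (w(e:=y)) = Le e (w(e:=0))" unfolding Le_def cond up by (rule refl)
    qed
    also have "\<dots> \<le> (\<integral>w. indicator (event0 n D \<tau>) w * opt_val F w \<partial>Mm)"
    proof (rule integral_mono)
      show "integrable Mm (\<lambda>w. indicator {..\<tau>} (w e) * Le e w)"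
      proof (rule intb)
        show "(\<lambda>w. indicator {..\<tau>} (w e) * Le e w) \<in> borel_measurable Mm"
          by (rule borel_measurable_times[OF measurable_compose[OF cm[OF e] borel_measurable_indicator] Lem]) simp
        fix w show "\<bar>indicator {..\<tau>} (w e) * Le e w\<bar> \<le> real n * \<tau>"
          using Leb[of e w] by (auto simp: indicator_def abs_le_iff)
      qed
      show "integrable Mm (\<lambda>w. indicator (event0 n D \<tau>) w * opt_val F w)"
      proof (rule intb)
        have "event0 n D \<tau> \<in> sets Mm" unfolding E0 Mm_def by (rule sets_PiM_I_finite) (simp_all add: Bo)
        then show "(\<lambda>w. indicator (event0 n D \<tau>) w * opt_val F w) \<in> borel_measurable Mm"
          by (rule borel_measurable_times[OF borel_measurable_indicator optm])
        fix w show "\<bar>indicator (event0 n D \<tau>) w * opt_val F w\<bar> \<le> real n * \<tau>"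
          using opt_le_ntau[OF finF Fne F_sub, of w \<tau>] Xnn[of w] tpos unfolding E0 by (auto simp: indicator_def PiE_iff)
      qed
      fix w assume w: "w \<in> space Mm"
      show "indicator {..\<tau>} (w e) * Le e w \<le> indicator (event0 n D \<tau>) w * opt_val F w"
      proof (cases "\<forall>j<n. w j \<le> \<tau>")
        case True
        then have "w \<in> event0 n D \<tau>" using w unfolding E0 spM by (auto simp: PiE_iff)
        moreover have T2: "\<forall>j<n. j \<noteq> e \<longrightarrow> w j \<le> \<tau>" using True by blast
        moreover have "w e \<le> \<tau>" using True e by blast
        ultimately show ?thesis unfolding LeT[OF T2] using opt_drop[OF finF Fne F_down, of w e] by simp
      next
        case False
        then obtain j where j: "j < n" "\<not> w j \<le> \<tau>" by auto
        have rhs: "0 \<le> indicator (event0 n D \<tau>) w * opt_val F w" using Xnn[of w] by simp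
        show ?thesis
        proof (cases "j = e")
          case True
          then have "indicator {..\<tau>} (w e) = (0::real)" using j by simp
          then show ?thesis using rhs by simp
        next
          case False
          then have nc: "\<not> (\<forall>j<n. j \<noteq> e \<longrightarrow> w j \<le> \<tau>)" using j by blast
          show ?thesis unfolding LeF[OF nc] using rhs by simp
        qed
      qed
    qed
    also have "\<dots> \<le> c * \<tau> * \<gamma>" by (rule SI)
    also have "\<dots> = q e * (c * \<tau> * r e)" using gqr[OF e] by simp
    finally show ?thesis using qpos[OF e] by simp
  qed
  have Hge: "(\<integral>w. Hf F n \<tau> e w \<partial>Mm) \<ge> r e / (1 + c)" if e: "e < n" for e
  proof -
    define m where "m = c * \<tau>"
    define a where "a = \<tau> / (\<tau> + m)"
    define \<kappa> where "\<kappa> = \<tau> / (\<tau> + m)^2"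
    have m0: "0 \<le> m" using c0 tpos by (simp add: m_def)
    have a_eq: "a = 1 / (1 + c)"
    proof -
      have "\<tau> + c * \<tau> = \<tau> * (1 + c)" by (simp add: algebra_simps)
      moreover have "1 + c \<noteq> 0" using c0 by simp
      ultimately show ?thesis using tpos unfolding a_def m_def by simp
    qed
    have k0: "0 \<le> \<kappa>" using tpos m0 by (simp add: \<kappa>_def)
    have "(\<integral>w. (a + \<kappa> * m) * Ind e w - \<kappa> * Ke e w \<partial>Mm) \<le> (\<integral>w. Hf F n \<tau> e w \<partial>Mm)"
    proof (rule integral_mono)
      show "integrable Mm (\<lambda>w. (a + \<kappa> * m) * Ind e w - \<kappa> * Ke e w)" using Indint Keint by auto
      show "integrable Mm (Hf F n \<tau> e)" by (rule Hint)
      fix w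
      show "(a + \<kappa> * m) * Ind e w - \<kappa> * Ke e w \<le> Hf F n \<tau> e w"
      proof (cases "\<forall>j<n. j \<noteq> e \<longrightarrow> w j < \<tau>")
        case True
        have "a - \<kappa> * (opt_val F (w(e:=0)) - m) \<le> \<tau> / (\<tau> + opt_val F (w(e:=0)))"
          unfolding a_def \<kappa>_def by (rule tangent[OF tpos Xnn m0])
        then show ?thesis unfolding IndT[OF True] KeT[OF True] HfT[OF True] by (simp add: algebra_simps)
      next
        case False
        show ?thesis unfolding IndF[OF False] KeF[OF False] HfF[OF False] by simp
      qed
    qed
    also have "(\<integral>w. (a + \<kappa> * m) * Ind e w - \<kappa> * Ke e w \<partial>Mm) = (a + \<kappa> * m) * r e - \<kappa> * (\<integral>w. Ke e w \<partial>Mm)"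
      using Indint Keint PrB[OF e] by simp
    finally have "(a + \<kappa> * m) * r e - \<kappa> * (\<integral>w. Ke e w \<partial>Mm) \<le> (\<integral>w. Hf F n \<tau> e w \<partial>Mm)" .
    moreover have "\<kappa> * (\<integral>w. Ke e w \<partial>Mm) \<le> \<kappa> * (m * r e)"
      using Kle[OF e] k0 by (intro mult_left_mono) (auto simp: m_def)
    ultimately show ?thesis using a_eq by (simp add: algebra_simps)
  qed
  have step1: "(\<Sum>e<n. (\<integral>w. indicator {\<tau><..} (w e) * Hf F n \<tau> e w \<partial>Mm)) \<le> (\<integral>w. algS n \<tau> w / opt_val F w \<partial>Mm)"
  proof -
    have ii: "integrable Mm (\<lambda>w. indicator {\<tau><..} (w e) * Hf F n \<tau> e w)" if "e < n" for e
    proof (rule intb)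
      show "(\<lambda>w. indicator {\<tau><..} (w e) * Hf F n \<tau> e w) \<in> borel_measurable Mm"
        by (rule borel_measurable_times[OF measurable_compose[OF cm[OF that] borel_measurable_indicator] Hm]) simp
      fix w show "\<bar>indicator {\<tau><..} (w e) * Hf F n \<tau> e w\<bar> \<le> 1"
        using Hb[of e w] by (auto simp: indicator_def)
    qed
    have "(\<Sum>e<n. (\<integral>w. indicator {\<tau><..} (w e) * Hf F n \<tau> e w \<partial>Mm)) = (\<integral>w. (\<Sum>e<n. indicator {\<tau><..} (w e) * Hf F n \<tau> e w) \<partial>Mm)"
      by (rule Bochner_Integration.integral_sum[symmetric]) (use ii in auto)
    also have "\<dots> \<le> (\<integral>w. algS n \<tau> w / opt_val F w \<partial>Mm)"
    proof (rule integral_mono)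
      show "integrable Mm (\<lambda>w. \<Sum>e<n. indicator {\<tau><..} (w e) * Hf F n \<tau> e w)"
        by (rule Bochner_Integration.integrable_sum) (rule ii, simp)
      show "integrable Mm (\<lambda>w. algS n \<tau> w / opt_val F w)" by (rule gint)
      fix w show "(\<Sum>e<n. indicator {\<tau><..} (w e) * Hf F n \<tau> e w) \<le> algS n \<tau> w / opt_val F w"
        by (rule sum_le[OF finF F_sub F_down F_single empF tpos])
    qed
    finally show ?thesis .
  qed
  have step2: "(\<integral>w. indicator {\<tau><..} (w e) * Hf F n \<tau> e w \<partial>Mm) \<ge> (1 - q e) * (r e / (1 + c))" if e: "e < n" for e
  proof -
    have "(\<integral>w. indicator {\<tau><..} (w e) * Hf F n \<tau> e w \<partial>Mm) = (1 - q e) * (\<integral>w. Hf F n \<tau> e w \<partial>Mm)"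
      unfolding Mm_def pe[symmetric]
    proof (rule indep[where M=D' and n=n and e=e and S="{\<tau><..}" and h="Hf F n \<tau> e" and K=1, OF Mp Bo e])
      show "Hf F n \<tau> e \<in> borel_measurable (PiM {..<n} D')" using Hm unfolding Mm_def .
      show "{\<tau><..} \<in> sets borel" by simp
      fix w show "\<bar>Hf F n \<tau> e w\<bar> \<le> 1" using Hb[of e w] by auto
    next
      fix w y
      have cond: "(\<forall>j<n. j \<noteq> e \<longrightarrow> (w(e:=y)) j < \<tau>) = (\<forall>j<n. j \<noteq> e \<longrightarrow> (w(e:=0)) j < \<tau>)" by simp
      have up: "(w(e:=y))(e:=0) = (w(e:=0))(e:=0)" by simp
      show "Hf F n \<tau> e (w(e:=y)) = Hf F n \<tau> e (w(e:=0))" unfolding Hf_def cond up by (rule refl)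
    qed
    also have "\<dots> \<ge> (1 - q e) * (r e / (1 + c))"
      using Hge[OF e] q01[of e] by (intro mult_left_mono) auto
    finally show ?thesis .
  qed
  have step3: "(\<Sum>e<n. (1 - q e) * (r e / (1 + c))) = \<gamma> / (1 + c) * (\<Sum>e<n. (1 - q e) / q e)"
    unfolding sum_distrib_left
  proof (rule sum.cong[OF refl])
    fix e assume "e \<in> {..<n}"
    then have e: "e < n" by simp
    show "(1 - q e) * (r e / (1 + c)) = \<gamma> / (1 + c) * ((1 - q e) / q e)"
    proof -
      have c1: "1 + c > 0" using c0 by simp
      have "\<gamma> / (1 + c) * ((1 - q e) / q e) = (q e * r e) * (1 - q e) / (q e * (1 + c))"
        unfolding gqr[OF e] by simp
      also have "\<dots> = r e * (1 - q e) / (1 + c)"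
        using qpos[OF e] by (simp add: mult.assoc)
      finally show ?thesis by simp
    qed
  qed
  have step4: "ln (1 / \<gamma>) \<le> (\<Sum>e<n. (1 - q e) / q e)"
  proof -
    have "ln (1 / \<gamma>) = ln (\<Prod>e<n. 1 / q e)" unfolding gq by (simp add: prod_dividef)
    also have "\<dots> = (\<Sum>e<n. ln (1 / q e))" proof (rule ln_prod)
      fix i assume "i \<in> {..<n}"
      then have "q i > 0" using qpos by simp
      then show "1 / q i \<noteq> 0" by simp
    qed simp
    also have "\<dots> \<le> (\<Sum>e<n. (1 - q e) / q e)"
    proof (rule sum_mono)
      fix e assume "e \<in> {..<n}"
      then have qe: "q e > 0" using qpos by simp
      have "ln (1 / q e) \<le> 1 / q e - 1" by (rule ln_le_minus_one) (use qe in simp)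
      also have "\<dots> = (1 - q e) / q e" using qe by (simp add: field_simps)
      finally show "ln (1 / q e) \<le> (1 - q e) / q e" .
    qed
    finally show ?thesis .
  qed
  have "\<gamma> * ln (1 / \<gamma>) / (c + 1) = \<gamma> / (1 + c) * ln (1 / \<gamma>)" by (simp add: add.commute)
  also have "\<dots> \<le> \<gamma> / (1 + c) * (\<Sum>e<n. (1 - q e) / q e)"
    using step4 gamma c0 by (intro mult_left_mono) auto
  also have "\<dots> = (\<Sum>e<n. (1 - q e) * (r e / (1 + c)))" by (rule step3[symmetric])
  also have "\<dots> \<le> (\<Sum>e<n. (\<integral>w. indicator {\<tau><..} (w e) * Hf F n \<tau> e w \<partial>Mm))"
    by (rule sum_mono) (use step2 in auto)
  also have "\<dots> \<le> (\<integral>w. algS n \<tau> w / opt_val F w \<partial>Mm)" by (rule step1)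
  finally show ?thesis unfolding gEq .
qed


end
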